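(* Let $\gamma=(\gamma_1,\gamma_2,\gamma_3):[a,b]\to\mathbb G$ be a Euclidean $C^2$-smooth regular curve and $t\in[a,b]$. Write $\omega(\dot\gamma(t))=\frac{\dot\gamma_2}{\gamma_1}-\dot\gamma_3$. (i) If $\omega(\dot\gamma(t))\ne0$, then $k^\infty_\gamma=\lim_{L\to+\infty}k^L_\gamma$ exists at $t$ and $$k^\infty_\gamma=\frac{\sqrt{\dot\gamma_1^2+\dot\gamma_2^2}}{|\gamma_1|\,|\omega(\dot\gamma(t))|}.$$ (ii) If $\omega(\dot\gamma(t))=0$ and $\frac{d}{dt}\omega(\dot\gamma(t))=0$, then the limit exists and, with $S=\big(\frac{\dot\gamma_1}{\gamma_1}\big)^2+\dot\gamma_3^2$, $$k^\infty_\gamma=\left\{\left[\Big(\frac{\ddot\gamma_1\gamma_1-\dot\gamma_1^2}{\gamma_1^2}\Big)^2+\ddot\gamma_3^2\right]S^{-2}-\left[\frac{\ddot\gamma_1\dot\gamma_1\gamma_1-\dot\gamma_1^3}{\gamma_1^3}+\dot\gamma_3\ddot\gamma_3\right]^2S^{-3}\right\}^{1/2}.$$ (iii) If $\omega(\dot\gamma(t))=0$ and $\frac{d}{dt}\omega(\dot\gamma(t))\ne0$, then $$\lim_{L\to+\infty}\frac{k^L_\gamma}{\sqrt L}=\frac{\big|\frac{d}{dt}\omega(\dot\gamma(t))\big|}{\big(\frac{\dot\gamma_1}{\gamma_1}\big)^2+\dot\gamma_3^2}.$$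
   Context: $\mathbb G=(0,\infty)\times\mathbb R^2$ is the affine group with coordinates $(x_1,x_2,x_3)$ and law $(a,b,c)\star(x,y,z)=(ax,ay+b,z+c)$. Let $X_1=x_1\partial_{x_1}$, $X_2=x_1\partial_{x_2}+\partial_{x_3}$, $X_3=x_1\partial_{x_2}$ with dual forms $\omega_1=x_1^{-1}dx_1$, $\omega_2=dx_3$, $\omega=x_1^{-1}dx_2-dx_3$. For $L>0$, $g_L=\omega_1\otimes\omega_1+\omega_2\otimes\omega_2+L\,\omega\otimes\omega$ with Levi-Civita connection $\nabla^L$, inner product $\langle\cdot,\cdot\rangle_L$ and norm $\|\cdot\|_L$. A curve is regular if $\dot\gamma\neq0$ everywhere. The curvature of $\gamma$ at $\gamma(t)$ is $$k^L_\gamma=\sqrt{\frac{\|\nabla^L_{\dot\gamma}\dot\gamma\|_L^2}{\|\dot\gamma\|_L^4}-\frac{\langle\nabla^L_{\dot\gamma}\dot\gamma,\dot\gamma\rangle_L^2}{\|\dot\gamma\|_L^6}},$$ and $k^\infty_\gamma:=\lim_{L\to+\infty}k^L_\gamma$ when it exists. *)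

theory Defs
  imports "HOL-Analysis.Analysis"
begin

text \<open>Points of the affine group G = (0,oo) x R^2 are vectors x :: real^3 with x$1 > 0;
  coordinates (x1,x2,x3) = (x$1, x$2, x$3). Tangent vectors are also real^3
  (components w.r.t. the coordinate vector fields d/dx1, d/dx2, d/dx3).\<close>

definition in_G :: "real^3 \<Rightarrow> bool" where
  "in_G x \<longleftrightarrow> x$1 > 0"

definition om1 :: "real^3 \<Rightarrow> real^3 \<Rightarrow> real" where
  "om1 x v = v$1 / x$1"
definition om2 :: "real^3 \<Rightarrow> real^3 \<Rightarrow> real" where
  "om2 x v = v$3"
definition om :: "real^3 \<Rightarrow> real^3 \<Rightarrow> real" where
  "om x v = v$2 / x$1 - v$3"

definition gL :: "real \<Rightarrow> real^3 \<Rightarrow> real^3 \<Rightarrow> real^3 \<Rightarrow> real" where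
  "gL L x v w = om1 x v * om1 x w + om2 x v * om2 x w + L * (om x v * om x w)"

definition normL :: "real \<Rightarrow> real^3 \<Rightarrow> real^3 \<Rightarrow> real" where
  "normL L x v = sqrt (gL L x v v)"

definition gmat :: "real \<Rightarrow> real^3 \<Rightarrow> real^3^3" where
  "gmat L x = (\<chi> i j. gL L x (axis i 1) (axis j 1))"

definition ginv :: "real \<Rightarrow> real^3 \<Rightarrow> real^3^3" where
  "ginv L x = matrix_inv (gmat L x)"

definition pderiv :: "3 \<Rightarrow> (real^3 \<Rightarrow> real) \<Rightarrow> real^3 \<Rightarrow> real" where
  "pderiv i f x = deriv (\<lambda>s. f (x + s *\<^sub>R axis i 1)) 0"

definition christoffel :: "real \<Rightarrow> 3 \<Rightarrow> 3 \<Rightarrow> 3 \<Rightarrow> real^3 \<Rightarrow> real" where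
  "christoffel L k i j x =
     (1/2) * (\<Sum>l\<in>UNIV. ginv L x $ k $ l *
        (pderiv i (\<lambda>y. gmat L y $ j $ l) x + pderiv j (\<lambda>y. gmat L y $ i $ l) x
         - pderiv l (\<lambda>y. gmat L y $ i $ j) x))"

definition cov_acc :: "real \<Rightarrow> real^3 \<Rightarrow> real^3 \<Rightarrow> real^3 \<Rightarrow> real^3" where
  "cov_acc L p v acc = (\<chi> k. acc $ k + (\<Sum>i\<in>UNIV. \<Sum>j\<in>UNIV. christoffel L k i j p * v $ i * v $ j))"

definition vel :: "(real \<Rightarrow> real^3) \<Rightarrow> real \<Rightarrow> real \<Rightarrow> real \<Rightarrow> real^3" where
  "vel \<gamma> a b t = vector_derivative \<gamma> (at t within {a..b})"

definition accel :: "(real \<Rightarrow> real^3) \<Rightarrow> real \<Rightarrow> real \<Rightarrow> real \<Rightarrow> real^3" where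
  "accel \<gamma> a b t = vector_derivative (vel \<gamma> a b) (at t within {a..b})"

definition curvL :: "real \<Rightarrow> (real \<Rightarrow> real^3) \<Rightarrow> real \<Rightarrow> real \<Rightarrow> real \<Rightarrow> real" where
  "curvL L \<gamma> a b t =
    (let p = \<gamma> t; v = vel \<gamma> a b t; N = cov_acc L p v (accel \<gamma> a b t) in
      sqrt (normL L p N ^ 2 / normL L p v ^ 4 - (gL L p N v)^2 / normL L p v ^ 6))"

end

theory Submission
  imports Defs
begin

definition Gm :: "real \<Rightarrow> real \<Rightarrow> 3 \<Rightarrow> 3 \<Rightarrow> real" where
  "Gm L r i j = (if i = 1 \<and> j = 1 then 1/r^2 else if i=2 \<and> j = 2 then L/r^2
   else if (i=2 \<and> j=3) \<or> (i=3 \<and> j=2) then -L/r else if i=3 \<and> j=3 then 1+L else 0)"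
definition dGm :: "real \<Rightarrow> real \<Rightarrow> 3 \<Rightarrow> 3 \<Rightarrow> real" where
  "dGm L r i j = (if i = 1 \<and> j = 1 then -2/r^3 else if i=2 \<and> j = 2 then -2*L/r^3
   else if (i=2 \<and> j=3) \<or> (i=3 \<and> j=2) then L/r^2 else 0)"

lemma gmat_all: "gmat L y $ i $ j = Gm L (y$1) i j"
proof -
  have "gmat L y = (\<chi> i j. Gm L (y$1) i j)"
  unfolding vec_eq_iff forall_3
  by (simp add: gmat_def gL_def om1_def om2_def om_def axis_def power2_eq_square Gm_def)
  then show ?thesis by simp
qed

lemma pderiv_dep1:
  assumes "\<And>y. f y = h (y$1)"
  shows "pderiv i f x = (if i = 1 then deriv h (x$1) else 0)"
proof (cases "i = 1")
  case True
  have e: "(\<lambda>s. f (x + s *\<^sub>R axis i 1)) = (\<lambda>s. h (s + x$1))"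
    using True by (simp add: assms axis_def add.commute)
  have "deriv (\<lambda>s. h (s + x$1)) 0 = deriv h (x$1)"
    unfolding deriv_def using DERIV_shift[of h _ 0 "x$1"] by simp
  then show ?thesis unfolding pderiv_def e using True by simp
next
  case False
  have e: "(\<lambda>s. f (x + s *\<^sub>R axis i 1)) = (\<lambda>s. h (x$1))"
    using False by (simp add: assms axis_def)
  show ?thesis unfolding pderiv_def e using False by simp
qed

lemma dGm: assumes "r > 0" shows "((\<lambda>r. Gm L r j l) has_real_derivative dGm L r j l) (at r)"
proof -
  have r: "r \<noteq> 0" using assms by simp
  show ?thesis
  using exhaust_3[of j] exhaust_3[of l]
  apply (elim disjE)
  apply (simp_all add: Gm_def dGm_def)
  apply (auto intro!: derivative_eq_intros simp: r field_simps power2_eq_square power3_eq_cube)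
  done
qed

lemma pd_gmat: assumes "x$1 > 0"
  shows "pderiv i (\<lambda>y. gmat L y $ j $ l) x = (if i = 1 then dGm L (x$1) j l else 0)"
  using pderiv_dep1[of "\<lambda>y. gmat L y $ j $ l" "\<lambda>r. Gm L r j l", OF gmat_all]
    DERIV_imp_deriv[OF dGm[OF assms]] by simp

definition Gi :: "real \<Rightarrow> real \<Rightarrow> real^3^3" where
  "Gi L r = (\<chi> i j. if i = 1 \<and> j = 1 then r^2 else if i=2 \<and> j = 2 then r^2*(1+L)/L
   else if (i=2 \<and> j=3) \<or> (i=3 \<and> j=2) then r else if i=3 \<and> j=3 then 1 else 0)"

lemma ginv_eq: assumes "x$1 > 0" "L > 0" shows "ginv L x = Gi L (x$1)"
proof -
  have r: "x$1 \<noteq> 0" "L \<noteq> 0" using assms by auto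
  have g: "gmat L x = (\<chi> i j. Gm L (x$1) i j)" by (simp add: vec_eq_iff gmat_all)
  have 1: "gmat L x ** Gi L (x$1) = mat 1"
    unfolding g vec_eq_iff forall_3 matrix_matrix_mult_def mat_def
    by (simp add: sum_3 Gm_def Gi_def r field_simps power2_eq_square)
  have 2: "Gi L (x$1) ** gmat L x = mat 1"
    unfolding g vec_eq_iff forall_3 matrix_matrix_mult_def mat_def
    by (simp add: sum_3 Gm_def Gi_def r field_simps power2_eq_square)
  have "\<And>B. gmat L x ** B = mat 1 \<and> B ** gmat L x = mat 1 \<Longrightarrow> B = Gi L (x$1)"
    by (metis 1 matrix_mul_assoc matrix_mul_lid matrix_mul_rid)
  then show ?thesis unfolding ginv_def matrix_inv_def
    using 1 2 by (metis (mono_tags, lifting) someI)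
qed

lemma cov_acc_eq: assumes "p$1 > 0" "L > 0"
  shows "cov_acc L p v acc $ 1 = acc$1 - (v$1)^2/(p$1) + (L/(p$1)) * (v$2)^2 - L * v$2 * v$3"
    "cov_acc L p v acc $ 2 = acc$2 - (2+L)/(p$1) * v$1 * v$2 + (1+L) * v$1 * v$3"
    "cov_acc L p v acc $ 3 = acc$3 - (L/(p$1)^2) * v$1 * v$2 + (L/(p$1)) * v$1 * v$3"
proof -
  have r: "p$1 \<noteq> 0" "L \<noteq> 0" using assms by auto
  show "cov_acc L p v acc $ 1 = acc$1 - (v$1)^2/(p$1) + (L/(p$1)) * (v$2)^2 - L * v$2 * v$3"
    unfolding cov_acc_def christoffel_def ginv_eq[OF assms] pd_gmat[OF assms(1)]
    by (simp add: sum_3 Gi_def dGm_def r field_simps power2_eq_square power3_eq_cube)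
  show "cov_acc L p v acc $ 2 = acc$2 - (2+L)/(p$1) * v$1 * v$2 + (1+L) * v$1 * v$3"
    unfolding cov_acc_def christoffel_def ginv_eq[OF assms] pd_gmat[OF assms(1)]
    by (simp add: sum_3 Gi_def dGm_def r field_simps power2_eq_square power3_eq_cube)
  show "cov_acc L p v acc $ 3 = acc$3 - (L/(p$1)^2) * v$1 * v$2 + (L/(p$1)) * v$1 * v$3"
    unfolding cov_acc_def christoffel_def ginv_eq[OF assms] pd_gmat[OF assms(1)]
    by (simp add: sum_3 Gi_def dGm_def r field_simps power2_eq_square power3_eq_cube)
qed
definition Fk :: "real \<Rightarrow> real \<Rightarrow> real \<Rightarrow> real \<Rightarrow> real \<Rightarrow> real \<Rightarrow> real \<Rightarrow> real \<Rightarrow> real \<Rightarrow> real" where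
  "Fk L A B C u1 u2 c1 c2 w0 = ((A+L*u1)^2 + (B+L*u2)^2 + L*C^2)/(c1^2+c2^2+L*w0^2)^2
     - ((A+L*u1)*c1 + (B+L*u2)*c2 + L*C*w0)^2/(c1^2+c2^2+L*w0^2)^3"

lemma gL_nonneg: "L > 0 \<Longrightarrow> gL L p v v \<ge> 0"
  unfolding gL_def by (simp add: add_nonneg_nonneg)

lemma curv_abs:
  assumes "p$1 > 0" "L > 0"
  shows "(let N = cov_acc L p v acc in sqrt (normL L p N ^ 2 / normL L p v ^ 4 - (gL L p N v)^2 / normL L p v ^ 6)) =
   sqrt (Fk L (acc$1/p$1 - (v$1)^2/(p$1)^2) (acc$3) (acc$2/p$1 - acc$3 - 2* v$1* v$2/(p$1)^2 + v$1* v$3/p$1)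
        (v$2* om p v/p$1) (-v$1* om p v/p$1) (v$1/p$1) (v$3) (om p v))"
proof -
  have r: "p$1 \<noteq> 0" using assms by auto
  define N where "N = cov_acc L p v acc"
  have n1: "om1 p N = (acc$1/p$1 - (v$1)^2/(p$1)^2) + L * (v$2* om p v/p$1)"
    unfolding N_def om1_def om_def cov_acc_eq[OF assms]
    by (simp add: r field_simps power2_eq_square)
  have n2: "om2 p N = acc$3 + L * (-v$1* om p v/p$1)"
    unfolding N_def om2_def om_def cov_acc_eq[OF assms]
    by (simp add: r field_simps power2_eq_square)
  have n3: "om p N = acc$2/p$1 - acc$3 - 2* v$1* v$2/(p$1)^2 + v$1* v$3/p$1"
    unfolding N_def om_def cov_acc_eq[OF assms]
    by (simp add: r field_simps power2_eq_square)
  have gNN: "gL L p N N = (om1 p N)^2 + (om2 p N)^2 + L * (om p N)^2"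
    unfolding gL_def by (simp add: power2_eq_square)
  have gvv: "gL L p v v = (v$1/p$1)^2 + (v$3)^2 + L * (om p v)^2"
    unfolding gL_def om1_def om2_def by (simp add: power2_eq_square)
  have gNv: "gL L p N v = om1 p N * (v$1/p$1) + om2 p N * v$3 + L * om p N * om p v"
    unfolding gL_def om1_def[of p v] om2_def[of p v] by simp
  have s1: "normL L p N ^ 2 = gL L p N N"
    unfolding normL_def using gL_nonneg[OF assms(2)] by simp
  have s2: "normL L p v ^ 4 = (gL L p v v)^2" "normL L p v ^ 6 = (gL L p v v)^3"
  proof -
    have q: "(y::real)^4 = (y^2)^2" "(y::real)^6 = (y^2)^3" for y
      by (simp_all flip: power_mult)
    show "normL L p v ^ 4 = (gL L p v v)^2" "normL L p v ^ 6 = (gL L p v v)^3"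
      unfolding normL_def q using gL_nonneg[OF assms(2), of p v] by simp_all
  qed
  show ?thesis
    unfolding Let_def N_def[symmetric] s1 s2 gNN gvv gNv n1 n2 n3 Fk_def
    by (simp add: algebra_simps)
qed
lemma inv_at_top: "((\<lambda>L::real. inverse L) \<longlongrightarrow> 0) at_top"
  by (rule tendsto_inverse_0_at_top[OF filterlim_ident])

lemma lim_i:
  assumes w0: "w0 \<noteq> 0"
  shows "((\<lambda>L. sqrt (Fk L A B C u1 u2 c1 c2 w0)) \<longlongrightarrow> sqrt ((u1^2+u2^2)/w0^4)) at_top"
proof -
  define g where "g e = ((A*e+u1)^2 + (B*e+u2)^2 + e*C^2)/(c1^2*e+c2^2*e+w0^2)^2
     - e*((A*e+u1)*c1+(B*e+u2)*c2+C*w0)^2/(c1^2*e+c2^2*e+w0^2)^3" for e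
  have ev: "eventually (\<lambda>L. Fk L A B C u1 u2 c1 c2 w0 = g (inverse L)) at_top"
    using eventually_gt_at_top[of 0]
  proof eventually_elim
    case (elim L)
    define e where "e = inverse L"
    have Le: "L = inverse e" "e \<noteq> 0" using elim by (auto simp: e_def)
    have e0: "e > 0" using elim by (simp add: e_def)
    have "0 < c1^2*e+c2^2*e+w0^2"
      using e0 w0 by (intro add_nonneg_pos add_nonneg_nonneg mult_nonneg_nonneg) auto
    then have Y: "c1^2*e+c2^2*e+w0^2 \<noteq> 0" by simp
    define k where "k = inverse e"
    have k: "k \<noteq> 0" "k * e = 1" using Le(2) by (auto simp: k_def)
    have p1: "A + k*u1 = k*(A*e+u1)" "B + k*u2 = k*(B*e+u2)"
      using k by (simp_all add: algebra_simps)
    have "k*(c1^2*e+c2^2*e+w0^2) = c1^2*(k*e)+c2^2*(k*e)+k*w0^2" by (simp add: algebra_simps)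
    then have p2: "c1^2+c2^2+k*w0^2 = k*(c1^2*e+c2^2*e+w0^2)"
      using k by simp
    have "k^2*(e*C^2) = k*C^2*(k*e)" by (simp add: power2_eq_square algebra_simps)
    then have h: "k^2*(e*C^2) = k*C^2" using k by simp
    have p3: "(k*(A*e+u1))^2 + (k*(B*e+u2))^2 + k*C^2 = k^2*((A*e+u1)^2 + (B*e+u2)^2 + e*C^2)"
    proof -
      have "(k*(A*e+u1))^2 + (k*(B*e+u2))^2 + k*C^2 = k^2*(A*e+u1)^2 + k^2*(B*e+u2)^2 + k^2*(e*C^2)"
        by (simp only: power_mult_distrib h)
      also have "\<dots> = k^2*((A*e+u1)^2 + (B*e+u2)^2 + e*C^2)" by (simp only: distrib_left)
      finally show ?thesis .
    qed
    have p4: "k*(A*e+u1)*c1 + k*(B*e+u2)*c2 + k*C*w0 = k*((A*e+u1)*c1+(B*e+u2)*c2+C*w0)"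
      by (simp add: algebra_simps)
    have q1: "k^2 * P / (k*Y)^2 = P / Y^2" for P Y
      using k by (simp add: power_mult_distrib)
    have q2: "(k*X)^2 / (k*Y)^3 = e * X^2 / Y^3" for X Y
    proof -
      have "(k*X)^2 / (k*Y)^3 = X^2/(k*Y^3)"
        using k by (simp add: power_mult_distrib power2_eq_square power3_eq_cube)
      also have "\<dots> = e * X^2 / Y^3" unfolding k_def
        by (simp add: divide_inverse inverse_mult_distrib mult.commute)
      finally show ?thesis .
    qed
    show ?case unfolding e_def[symmetric] k_def[symmetric] Fk_def g_def Le(1) p1 p2 p3 p4 q1 q2
      by (simp add: k_def)
  qed
  have "((\<lambda>L. g (inverse L)) \<longlongrightarrow> g 0) at_top"
    unfolding g_def using w0 by (intro tendsto_intros inv_at_top) auto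
  then have "((\<lambda>L. Fk L A B C u1 u2 c1 c2 w0) \<longlongrightarrow> g 0) at_top"
    using ev by (simp add: tendsto_cong)
  moreover have "g 0 = (u1^2+u2^2)/w0^4" unfolding g_def by (simp flip: power_mult)
  ultimately show ?thesis by (intro tendsto_intros) auto
qed

lemma lim_iii:
  assumes S: "c1^2 + c2^2 > 0"
  shows "((\<lambda>L. sqrt (Fk L A B C 0 0 c1 c2 0) / sqrt L) \<longlongrightarrow> \<bar>C\<bar> / (c1^2+c2^2)) at_top"
proof -
  define S where "S = c1^2 + c2^2"
  have S0: "S > 0" using S by (simp add: S_def)
  define g where "g e = ((A^2+B^2)*e + C^2)/S^2 - e*(A*c1+B*c2)^2/S^3" for e
  have ev: "eventually (\<lambda>L. sqrt (Fk L A B C 0 0 c1 c2 0) / sqrt L = sqrt (g (inverse L))) at_top"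
    using eventually_gt_at_top[of 0]
  proof eventually_elim
    case (elim L)
    have "Fk L A B C 0 0 c1 c2 0 / L = g (inverse L)"
      unfolding Fk_def g_def S_def[symmetric] using elim S0
      by (simp add: field_simps power2_eq_square power3_eq_cube)
    then show ?case by (metis real_sqrt_divide)
  qed
  have "((\<lambda>L. sqrt (g (inverse L))) \<longlongrightarrow> sqrt (g 0)) at_top"
    unfolding g_def using S0 by (intro tendsto_intros inv_at_top) auto
  moreover have "sqrt (g 0) = \<bar>C\<bar> / (c1^2+c2^2)"
    unfolding g_def S_def[symmetric] using S0
    by (simp add: real_sqrt_divide power2_eq_square)
  ultimately show ?thesis using ev by (simp add: tendsto_cong)
qed
theorem lemma2p6:
  fixes \<gamma> \<gamma>' \<gamma>'' :: "real \<Rightarrow> real^3" and a b t :: real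
  assumes ab: "a < b"
    and inG: "\<forall>s\<in>{a..b}. in_G (\<gamma> s)"
    and d1: "\<forall>s\<in>{a..b}. (\<gamma> has_vector_derivative \<gamma>' s) (at s within {a..b})"
    and d2: "\<forall>s\<in>{a..b}. (\<gamma>' has_vector_derivative \<gamma>'' s) (at s within {a..b})"
    and c2: "continuous_on {a..b} \<gamma>''"
    and reg: "\<forall>s\<in>{a..b}. \<gamma>' s \<noteq> 0"
    and t: "t \<in> {a..b}"
  shows
   "(om (\<gamma> t) (\<gamma>' t) \<noteq> 0 \<longrightarrow>
       ((\<lambda>L. curvL L \<gamma> a b t) \<longlongrightarrow>
          sqrt ((\<gamma>' t $ 1)^2 + (\<gamma>' t $ 2)^2) / (\<bar>\<gamma> t $ 1\<bar> * \<bar>om (\<gamma> t) (\<gamma>' t)\<bar>)) at_top)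
    \<and> (\<forall>w. ((\<lambda>s. om (\<gamma> s) (\<gamma>' s)) has_real_derivative w) (at t within {a..b}) \<longrightarrow>
         om (\<gamma> t) (\<gamma>' t) = 0 \<longrightarrow> w = 0 \<longrightarrow>
         (let g1 = \<gamma> t $ 1; d1 = \<gamma>' t $ 1; d3 = \<gamma>' t $ 3;
              dd1 = \<gamma>'' t $ 1; dd3 = \<gamma>'' t $ 3;
              S = (d1 / g1)^2 + d3^2 in
          ((\<lambda>L. curvL L \<gamma> a b t) \<longlongrightarrow>
            sqrt ((((dd1 * g1 - d1^2) / g1^2)^2 + dd3^2) * S powi (-2)
                  - ((dd1 * d1 * g1 - d1^3) / g1^3 + d3 * dd3)^2 * S powi (-3))) at_top))
    \<and> (\<forall>w. ((\<lambda>s. om (\<gamma> s) (\<gamma>' s)) has_real_derivative w) (at t within {a..b}) \<longrightarrow>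
         om (\<gamma> t) (\<gamma>' t) = 0 \<longrightarrow> w \<noteq> 0 \<longrightarrow>
         ((\<lambda>L. curvL L \<gamma> a b t / sqrt L) \<longlongrightarrow>
            \<bar>w\<bar> / ((\<gamma>' t $ 1 / \<gamma> t $ 1)^2 + (\<gamma>' t $ 3)^2)) at_top)"
proof -
  have cb: "cbox a b = {a..b}" by (rule cbox_interval)
  define p where "p = \<gamma> t"
  define v where "v = \<gamma>' t"
  define acc where "acc = \<gamma>'' t"
  define x where "x = p$1"
  have x0: "x > 0" using inG t by (simp add: x_def p_def in_G_def)
  have vel_eq: "vel \<gamma> a b s = \<gamma>' s" if "s \<in> {a..b}" for s
    unfolding vel_def using vector_derivative_within_cbox[of a b s \<gamma> "\<gamma>' s"] ab that d1 cb by simp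
  have "(vel \<gamma> a b has_vector_derivative \<gamma>'' t) (at t within {a..b})"
    using has_vector_derivative_transform[of t "{a..b}" "vel \<gamma> a b" \<gamma>' "\<gamma>'' t"] t vel_eq d2 by blast
  then have acc_eq: "accel \<gamma> a b t = acc"
    unfolding accel_def acc_def using vector_derivative_within_cbox[of a b t "vel \<gamma> a b" "\<gamma>'' t"] ab t cb by simp
  define A where "A = acc$1/p$1 - (v$1)^2/(p$1)^2"
  define B where "B = acc$3"
  define C where "C = acc$2/p$1 - acc$3 - 2* v$1* v$2/(p$1)^2 + v$1* v$3/p$1"
  define u1 where "u1 = v$2* om p v/p$1"
  define u2 where "u2 = -v$1* om p v/p$1"
  define c1 where "c1 = v$1/p$1"
  define c2 where "c2 = v$3"
  have curv: "curvL L \<gamma> a b t = sqrt (Fk L A B C u1 u2 c1 c2 (om p v))" if "L > 0" for L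
    unfolding curvL_def vel_eq[OF t] acc_eq p_def[symmetric] v_def[symmetric]
    using curv_abs[of p L v acc] x0 that
    by (simp add: A_def B_def C_def u1_def u2_def c1_def c2_def x_def)
  have evc: "eventually (\<lambda>L. curvL L \<gamma> a b t = sqrt (Fk L A B C u1 u2 c1 c2 (om p v))) at_top"
    using eventually_gt_at_top[of 0] by eventually_elim (rule curv)
  have comp: "((\<lambda>s. \<gamma> s $ i) has_real_derivative \<gamma>' t $ i) (at t within {a..b})"
     "((\<lambda>s. \<gamma>' s $ i) has_real_derivative \<gamma>'' t $ i) (at t within {a..b})" for i
    using bounded_linear.has_vector_derivative[OF bounded_linear_vec_nth, of \<gamma> "\<gamma>' t" "at t within {a..b}" i]
      bounded_linear.has_vector_derivative[OF bounded_linear_vec_nth, of \<gamma>' "\<gamma>'' t" "at t within {a..b}" i]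
      d1 d2 t
    by (auto simp: has_real_derivative_iff_has_vector_derivative)
  define W where "W = (acc$2 * x - v$2 * v$1)/x^2 - acc$3"
  have omd: "((\<lambda>s. om (\<gamma> s) (\<gamma>' s)) has_real_derivative W) (at t within {a..b})"
    unfolding om_def W_def
    using x0 by (auto intro!: derivative_eq_intros comp simp: x_def p_def v_def acc_def field_simps power2_eq_square)
  have wW: "w = W" if "((\<lambda>s. om (\<gamma> s) (\<gamma>' s)) has_real_derivative w) (at t within {a..b})" for w
    using vector_derivative_unique_within_closed_interval[of a b t "\<lambda>s. om (\<gamma> s) (\<gamma>' s)" w W]
      that omd ab t cb by (simp add: has_real_derivative_iff_has_vector_derivative)
  have CW: "C = W - v$1 * om p v / x"
    unfolding C_def W_def om_def x_def using x0 by (simp add: x_def field_simps power2_eq_square)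
  show ?thesis
  proof (intro conjI allI impI)
    assume om0: "om (\<gamma> t) (\<gamma>' t) \<noteq> 0"
    then have om0': "om p v \<noteq> 0" by (simp add: p_def v_def)
    have val: "sqrt ((u1^2+u2^2)/(om p v)^4) = sqrt ((\<gamma>' t $ 1)^2 + (\<gamma>' t $ 2)^2) / (\<bar>\<gamma> t $ 1\<bar> * \<bar>om (\<gamma> t) (\<gamma>' t)\<bar>)"
    proof -
      have "(u1^2+u2^2)/(om p v)^4 = ((v$1)^2 + (v$2)^2) / (x * om p v)^2"
        unfolding u1_def u2_def x_def using om0' x0
        by (simp add: x_def field_simps power2_eq_square power4_eq_xxxx)
      then show ?thesis
        by (simp add: real_sqrt_divide p_def v_def x_def abs_mult)
    qed
    show "((\<lambda>L. curvL L \<gamma> a b t) \<longlongrightarrow> sqrt ((\<gamma>' t $ 1)^2 + (\<gamma>' t $ 2)^2) / (\<bar>\<gamma> t $ 1\<bar> * \<bar>om (\<gamma> t) (\<gamma>' t)\<bar>)) at_top"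
      using lim_i[OF om0', of A B C u1 u2 c1 c2] evc val by (simp add: tendsto_cong)
  next
    fix w assume wd: "((\<lambda>s. om (\<gamma> s) (\<gamma>' s)) has_real_derivative w) (at t within {a..b})"
      and om0: "om (\<gamma> t) (\<gamma>' t) = 0" and w0: "w = 0"
    have om0': "om p v = 0" using om0 by (simp add: p_def v_def)
    have C0: "C = 0" using CW wW[OF wd] w0 om0' by simp
    have u0: "u1 = 0" "u2 = 0" using om0' by (simp_all add: u1_def u2_def)
    define S where "S = c1^2 + c2^2"
    have "Fk L A B C u1 u2 c1 c2 (om p v) = (A^2 + B^2) * S powi (-2) - (A*c1 + B*c2)^2 * S powi (-3)" for L
      unfolding Fk_def C0 u0 om0' S_def[symmetric]
      by (simp add: power_int_minus divide_inverse)
    moreover have "A = (acc$1 * x - (v$1)^2) / x^2" "A * c1 + B * c2 = (acc$1 * v$1 * x - (v$1)^3)/x^3 + v$3 * acc$3"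
      unfolding A_def B_def c1_def c2_def x_def using x0
      by (simp_all add: x_def field_simps power2_eq_square power3_eq_cube)
    moreover have "S = (v$1/x)^2 + (v$3)^2" by (simp add: S_def c1_def c2_def x_def)
    ultimately have "eventually (\<lambda>L. curvL L \<gamma> a b t = (let g1 = \<gamma> t $ 1; d1 = \<gamma>' t $ 1; d3 = \<gamma>' t $ 3;
              dd1 = \<gamma>'' t $ 1; dd3 = \<gamma>'' t $ 3;
              S = (d1 / g1)^2 + d3^2 in
            sqrt ((((dd1 * g1 - d1^2) / g1^2)^2 + dd3^2) * S powi (-2)
                  - ((dd1 * d1 * g1 - d1^3) / g1^3 + d3 * dd3)^2 * S powi (-3)))) at_top"
      using evc by (simp add: Let_def p_def v_def acc_def x_def B_def)
    then show "(let g1 = \<gamma> t $ 1; d1 = \<gamma>' t $ 1; d3 = \<gamma>' t $ 3;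
              dd1 = \<gamma>'' t $ 1; dd3 = \<gamma>'' t $ 3;
              S = (d1 / g1)^2 + d3^2 in
          ((\<lambda>L. curvL L \<gamma> a b t) \<longlongrightarrow>
            sqrt ((((dd1 * g1 - d1^2) / g1^2)^2 + dd3^2) * S powi (-2)
                  - ((dd1 * d1 * g1 - d1^3) / g1^3 + d3 * dd3)^2 * S powi (-3))) at_top)"
      unfolding Let_def by (rule tendsto_eventually)
  next
    fix w assume wd: "((\<lambda>s. om (\<gamma> s) (\<gamma>' s)) has_real_derivative w) (at t within {a..b})"
      and om0: "om (\<gamma> t) (\<gamma>' t) = 0" and w0: "w \<noteq> 0"
    have om0': "om p v = 0" using om0 by (simp add: p_def v_def)
    have Cw: "C = w" using CW wW[OF wd] om0' by simp
    have u0: "u1 = 0" "u2 = 0" using om0' by (simp_all add: u1_def u2_def)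
    have S0: "c1^2 + c2^2 > 0"
    proof (rule ccontr)
      assume "\<not> c1^2 + c2^2 > 0"
      moreover have "c1^2 \<ge> 0" "c2^2 \<ge> 0" by simp_all
      ultimately have "c1^2 = 0" "c2^2 = 0" by linarith+
      then have "c1 = 0" "c2 = 0" by simp_all
      then have "v$1 = 0" "v$3 = 0" using x0 by (auto simp: c1_def c2_def x_def)
      moreover have "v$2 = 0" using om0' x0 \<open>v$3 = 0\<close> by (simp add: om_def x_def)
      ultimately have "v = 0" by (simp add: vec_eq_iff forall_3)
      then show False using reg t by (simp add: v_def)
    qed
    have ev3: "eventually (\<lambda>L. sqrt (Fk L A B C 0 0 c1 c2 0) / sqrt L = curvL L \<gamma> a b t / sqrt L) at_top"
      using evc u0 om0' by (auto elim: eventually_mono)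
    show "((\<lambda>L. curvL L \<gamma> a b t / sqrt L) \<longlongrightarrow>
            \<bar>w\<bar> / ((\<gamma>' t $ 1 / \<gamma> t $ 1)^2 + (\<gamma>' t $ 3)^2)) at_top"
      using Lim_transform_eventually[OF lim_iii[OF S0, of A B C] ev3] Cw
      by (simp add: c1_def c2_def p_def v_def)
  qed
qed

end
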